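(* Let $\mathds{k}$ be an algebraically closed field, $A$ a finite abelian group, $\omega$ a normalized 3-cocycle on $A$ with values in $\mathds{k}^{\times}$, $B$ a finite abelian group, $f:B\to A$ a homomorphism with kernel $K$, and $\phi:B\times B\to\mathds{k}^\times$ a 2-cochain with $d\phi=f^*\omega^{-1}$. Let $Bil(\phi)(b,k)=\phi(b,k)/\phi(k,b)$ for $b\in B,k\in K$ (a bilinear map $B\times K\to\mathds{k}^\times$), $K^{\bot}:=\{b\in B: Bil(\phi)(b,k)=1\ \forall k\in K\}$ and $(K\cap K^{\bot})^{\bot}:=\{b\in B: Bil(\phi)(b,k)=1\ \forall k\in K\cap K^{\bot}\}$. Then $(K\cap K^{\bot})^{\bot} = K + K^{\bot}$.
   Context: For a 2-cochain $\kappa$, $(d\kappa)(a,b,c)=\kappa(b,c)\kappa(a+b,c)^{-1}\kappa(a,b+c)\kappa(a,b)^{-1}$; $(f^*\omega^{-1})(b,c,d)=\omega(f(b),f(c),f(d))^{-1}$. *)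

theory Defs
  imports "HOL-Computational_Algebra.Polynomial"
begin

definition normalized_3cocycle :: "('a::ab_group_add \<Rightarrow> 'a \<Rightarrow> 'a \<Rightarrow> 'k::field) \<Rightarrow> bool" where
  "normalized_3cocycle \<omega> \<longleftrightarrow>
     (\<forall>a b c. \<omega> a b c \<noteq> 0) \<and>
     (\<forall>a b. \<omega> 0 a b = 1 \<and> \<omega> a 0 b = 1 \<and> \<omega> a b 0 = 1) \<and>
     (\<forall>a b c d. \<omega> b c d * inverse (\<omega> (a + b) c d) * \<omega> a (b + c) d
                 * inverse (\<omega> a b (c + d)) * \<omega> a b c = 1)"

definition cobound2 :: "('b::ab_group_add \<Rightarrow> 'b \<Rightarrow> 'k::field) \<Rightarrow> 'b \<Rightarrow> 'b \<Rightarrow> 'b \<Rightarrow> 'k" where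
  "cobound2 \<kappa> a b c = \<kappa> b c * inverse (\<kappa> (a + b) c) * \<kappa> a (b + c) * inverse (\<kappa> a b)"

definition group_hom :: "('b::ab_group_add \<Rightarrow> 'a::ab_group_add) \<Rightarrow> bool" where
  "group_hom f \<longleftrightarrow> (\<forall>x y. f (x + y) = f x + f y)"

definition Bil :: "('b \<Rightarrow> 'b \<Rightarrow> 'k::field) \<Rightarrow> 'b \<Rightarrow> 'b \<Rightarrow> 'k" where
  "Bil \<phi> b k = \<phi> b k / \<phi> k b"

definition perp :: "('b \<Rightarrow> 'b \<Rightarrow> 'k::field) \<Rightarrow> 'b set \<Rightarrow> 'b set" where
  "perp \<phi> S = {b. \<forall>k\<in>S. Bil \<phi> b k = 1}"

end

theory Submission
  imports Defs
begin
lemma roots_bound: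
  fixes c :: "'k::field"
  assumes "0 < m"
  shows "finite {z. z^m = c} \<and> card {z. z^m = c} \<le> m"
proof -
  define p where "p = monom (1::'k) m + [:-c:]"
  have ev: "poly p z = z^m - c" for z by (simp add: p_def poly_monom)
  have deg: "degree p = m" using assms unfolding p_def
    by (subst degree_add_eq_left) (auto simp: degree_monom_eq)
  have nz: "p \<noteq> 0" using deg assms by auto
  have eq: "{z. z^m = c} = {z. poly p z = 0}" by (auto simp: ev)
  show ?thesis unfolding eq using card_poly_roots_bound[OF nz] poly_roots_finite[OF nz] deg by simp
qed

fun gmul :: "nat \<Rightarrow> 'b::ab_group_add \<Rightarrow> 'b" where
  "gmul 0 g = 0" | "gmul (Suc n) g = g + gmul n g"

lemma gmul_add: "gmul (m + n) g = gmul m g + gmul n g"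
  by (induction m) (auto simp: algebra_simps)

definition grpcl :: "'b::ab_group_add set \<Rightarrow> bool" where
  "grpcl S \<longleftrightarrow> 0 \<in> S \<and> (\<forall>x\<in>S. \<forall>y\<in>S. x + y \<in> S)"

lemma gmul_closed: "grpcl S \<Longrightarrow> g \<in> S \<Longrightarrow> gmul n g \<in> S"
  by (induction n) (auto simp: grpcl_def)

lemma gmul_zero_exists: "\<exists>n>0. gmul n (g::'b::{ab_group_add,finite}) = 0"
proof -
  have "\<not> inj (\<lambda>n. gmul n g)"
  proof
    assume "inj (\<lambda>n. gmul n g)"
    then have "finite (UNIV::nat set)" using finite_imageD[of "\<lambda>n. gmul n g" UNIV] by auto
    then show False by simp
  qed
  then obtain i j where ij: "i \<noteq> j" "gmul i g = gmul j g" unfolding inj_def by auto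
  show ?thesis
  proof (cases "i < j")
    case True
    have "gmul j g = gmul (j - i) g + gmul i g" using gmul_add[of "j-i" i g] True by simp
    then show ?thesis using ij True by (intro exI[of _ "j-i"]) auto
  next
    case False
    then have "j < i" using ij by auto
    have "gmul i g = gmul (i - j) g + gmul j g" using gmul_add[of "i-j" j g] \<open>j<i\<close> by simp
    then show ?thesis using ij \<open>j<i\<close> by (intro exI[of _ "i-j"]) auto
  qed
qed

lemma closed_minus:
  assumes "grpcl (S::'b::{ab_group_add,finite} set)" "x \<in> S" shows "- x \<in> S"
proof -
  obtain n where n: "n > 0" "gmul n x = 0" using gmul_zero_exists by blast
  then obtain k where "n = Suc k" by (cases n) auto
  then have "x + gmul k x = 0" using n by simp
  then have "gmul k x = - x" by (metis neg_eq_iff_add_eq_0)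
  then show ?thesis using gmul_closed[OF assms] by metis
qed

lemma closed_diff:
  assumes "grpcl (S::'b::{ab_group_add,finite} set)" "x \<in> S" "y \<in> S" shows "x - y \<in> S"
  using closed_minus[OF assms(1) assms(3)] assms unfolding grpcl_def
  by (metis diff_conv_add_uminus)

fun spanL :: "'b::ab_group_add set \<Rightarrow> 'b list \<Rightarrow> 'b set" where
  "spanL H [] = H"
| "spanL H (g # L) = {gmul n g + t | n t. t \<in> spanL H L}"

lemma spanL_closed: "grpcl H \<Longrightarrow> grpcl (spanL H L)"
proof (induction L)
  case Nil then show ?case by simp
next
  case (Cons g L)
  then have c: "grpcl (spanL H L)" by simp
  show ?case unfolding grpcl_def
  proof (intro conjI ballI)
    show "0 \<in> spanL H (g # L)" using c unfolding grpcl_def by (auto intro!: exI[of _ 0])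
  next
    fix x y assume "x \<in> spanL H (g # L)" "y \<in> spanL H (g # L)"
    then obtain n t n' t' where "x = gmul n g + t" "t \<in> spanL H L" "y = gmul n' g + t'" "t' \<in> spanL H L"
      by auto
    then have "x + y = gmul (n + n') g + (t + t')" "t + t' \<in> spanL H L"
      using c by (auto simp: gmul_add algebra_simps grpcl_def)
    then show "x + y \<in> spanL H (g # L)" by auto
  qed
qed

lemma spanL_sub: "x \<in> spanL H L \<Longrightarrow> x \<in> spanL H (g # L)"
proof -
  assume "x \<in> spanL H L"
  moreover have "x = gmul 0 g + x" by simp
  ultimately show ?thesis by (simp only: spanL.simps) blast
qed

lemma H_sub_spanL: "H \<subseteq> spanL H L"
proof (induction L)
  case (Cons g L) then show ?case using spanL_sub[of _ H L g] by blast
qed simp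

definition Ch :: "'b::ab_group_add set \<Rightarrow> 'b set \<Rightarrow> ('b \<Rightarrow> 'k::field) set" where
  "Ch T H = {\<chi>. (\<forall>x\<in>T. \<forall>y\<in>T. \<chi> (x + y) = \<chi> x * \<chi> y) \<and> (\<forall>x\<in>T. \<chi> x \<noteq> 0)
      \<and> (\<forall>x. x \<notin> T \<longrightarrow> \<chi> x = 0) \<and> (\<forall>h\<in>H. \<chi> h = 1)}"

lemma Ch_zero: assumes "\<chi> \<in> Ch T H" "grpcl T" shows "\<chi> 0 = 1"
proof -
  have "\<chi> (0 + 0) = \<chi> 0 * \<chi> 0" "\<chi> 0 \<noteq> 0" using assms unfolding Ch_def grpcl_def by blast+
  then have "\<chi> 0 * \<chi> 0 = \<chi> 0 * 1" by simp
  then show ?thesis using \<open>\<chi> 0 \<noteq> 0\<close> by (metis mult_left_cancel)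
qed

lemma Ch_mult: assumes "\<chi> \<in> Ch T H" "grpcl T" "g \<in> T" shows "\<chi> (gmul n g) = \<chi> g ^ n"
proof (induction n)
  case 0
  then show ?case using Ch_zero[OF assms(1,2)] by simp
next
  case (Suc n)
  have "gmul n g \<in> T" using gmul_closed assms by blast
  then have "\<chi> (g + gmul n g) = \<chi> g * \<chi> (gmul n g)" using assms(1,3) unfolding Ch_def by blast
  then show ?case using Suc by (simp only: gmul.simps power_Suc)
qed


lemma Ch_card:
  fixes H :: "'b::{ab_group_add,finite} set"
  assumes cH: "grpcl H"
  shows "finite (Ch (spanL H L) H :: ('b \<Rightarrow> 'k::field) set) \<and>
         card H * card (Ch (spanL H L) H :: ('b \<Rightarrow> 'k) set) \<le> card (spanL H L)"
proof (induction L)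
  case Nil
  have "Ch H H \<subseteq> {(\<lambda>x. if x \<in> H then 1 else 0) :: 'b \<Rightarrow> 'k}"
    unfolding Ch_def by auto
  then have "finite (Ch H H :: ('b \<Rightarrow> 'k) set)" "card (Ch H H :: ('b \<Rightarrow> 'k) set) \<le> 1"
    using finite_subset card_mono[of "{(\<lambda>x. if x \<in> H then 1 else 0) :: 'b \<Rightarrow> 'k}"] by fastforce+
  then show ?case by simp
next
  case (Cons g L)
  define T' where "T' = spanL H L"
  define T where "T = spanL H (g # L)"
  have IH1: "finite (Ch T' H :: ('b \<Rightarrow> 'k) set)" and IH2: "card H * card (Ch T' H :: ('b \<Rightarrow> 'k) set) \<le> card T'"
    using Cons unfolding T'_def by auto
  have cT': "grpcl T'" unfolding T'_def using spanL_closed cH by blast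
  have cT: "grpcl T" unfolding T_def using spanL_closed cH by blast
  have sub: "T' \<subseteq> T" unfolding T_def T'_def using spanL_sub by blast
  have HT': "H \<subseteq> T'" unfolding T'_def by (rule H_sub_spanL)
  have T_eq: "T = {gmul n g + t | n t. t \<in> T'}" unfolding T_def T'_def by simp
  have gT: "g \<in> T"
  proof -
    have "g = gmul 1 g + 0" by simp
    moreover have "(0::'b) \<in> T'" using cT' unfolding grpcl_def by blast
    ultimately show ?thesis unfolding T_eq by blast
  qed
  define m where "m = (LEAST n. 0 < n \<and> gmul n g \<in> T')"
  have ex: "\<exists>n. 0 < n \<and> gmul n g \<in> T'"
    using gmul_zero_exists[of g] cT' unfolding grpcl_def by auto
  have m: "0 < m" "gmul m g \<in> T'" using LeastI_ex[OF ex] unfolding m_def by auto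
  have mmin: "gmul n g \<notin> T'" if "0 < n" "n < m" for n
    using not_less_Least[of n "\<lambda>n. 0 < n \<and> gmul n g \<in> T'"] that unfolding m_def by auto
  have aux: False if "i < j" "j < m" "gmul i g + t = gmul j g + t'" "t \<in> T'" "t' \<in> T'" for i j t t'
  proof -
    have "gmul j g = gmul (j - i) g + gmul i g" using gmul_add[of "j-i" i g] that by simp
    then have "gmul (j - i) g = t - t'" using that(3) by (simp add: algebra_simps)
    moreover have "t - t' \<in> T'" using closed_diff[OF cT' that(4,5)] .
    moreover have "j - i < m" "0 < j - i" using that by linarith+
    ultimately show False using mmin[of "j - i"] by auto
  qed
  have injF: "inj_on (\<lambda>(i, t). gmul i g + t) ({..<m} \<times> T')"
  proof (rule inj_onI)
    fix p q assume hp: "p \<in> {..<m} \<times> T'" "q \<in> {..<m} \<times> T'"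
      "(\<lambda>(i, t). gmul i g + t) p = (\<lambda>(i, t). gmul i g + t) q"
    obtain i t j t' where pq: "p = (i, t)" "q = (j, t')" by (cases p, cases q) auto
    have h: "i < m" "t \<in> T'" "j < m" "t' \<in> T'" "gmul i g + t = gmul j g + t'"
      using hp unfolding pq by auto
    have "i = j"
    proof (rule ccontr)
      assume "i \<noteq> j"
      then have "i < j \<or> j < i" by auto
      then show False using aux[of i j t t'] aux[of j i t' t] h by auto
    qed
    then show "p = q" using h pq by simp
  qed
  have "card ({..<m} \<times> T') \<le> card T"
    by (rule card_inj_on_le[OF injF]) (auto simp: T_eq)
  then have cardT: "m * card T' \<le> card T" by (simp add: card_cartesian_product)
  define R where "R = (\<lambda>(\<chi>::'b \<Rightarrow> 'k). (\<lambda>x. if x \<in> T' then \<chi> x else 0))"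
  define E where "E = (\<lambda>\<chi>. (R \<chi>, \<chi> g))"
  define S where "S = Sigma (Ch T' H) (\<lambda>\<psi>::'b \<Rightarrow> 'k. {z. z ^ m = \<psi> (gmul m g)})"
  have ES: "E ` Ch T H \<subseteq> S"
  proof
    fix p assume "p \<in> E ` Ch T H"
    then obtain \<chi> where \<chi>: "\<chi> \<in> Ch T H" "p = E \<chi>" by auto
    have "R \<chi> \<in> Ch T' H"
      using \<chi>(1) sub HT' cT' unfolding Ch_def R_def grpcl_def by (auto simp: subset_iff)
    moreover have "\<chi> g ^ m = R \<chi> (gmul m g)"
      using Ch_mult[OF \<chi>(1) cT gT, of m] m unfolding R_def by simp
    ultimately show "p \<in> S" unfolding S_def \<chi>(2) E_def by simp
  qed
  have injE: "inj_on E (Ch T H)"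
  proof (rule inj_onI)
    fix \<chi>1 \<chi>2 assume h: "\<chi>1 \<in> Ch T H" "\<chi>2 \<in> Ch T H" "E \<chi>1 = E \<chi>2"
    then have hR: "R \<chi>1 = R \<chi>2" and hg: "\<chi>1 g = \<chi>2 g" unfolding E_def by auto
    show "\<chi>1 = \<chi>2"
    proof
      fix x
      show "\<chi>1 x = \<chi>2 x"
      proof (cases "x \<in> T")
        case True
        then obtain n t where nt: "x = gmul n g + t" "t \<in> T'" unfolding T_eq by auto
        have gn: "gmul n g \<in> T" using gmul_closed[OF cT gT] .
        have tT: "t \<in> T" using nt sub by auto
        have "\<chi>1 t = \<chi>2 t" using fun_cong[OF hR, of t] nt unfolding R_def by simp
        moreover have "\<chi>1 x = \<chi>1 g ^ n * \<chi>1 t"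
          using h(1) gn tT Ch_mult[OF h(1) cT gT, of n] unfolding nt(1) Ch_def by auto
        moreover have "\<chi>2 x = \<chi>2 g ^ n * \<chi>2 t"
          using h(2) gn tT Ch_mult[OF h(2) cT gT, of n] unfolding nt(1) Ch_def by auto
        ultimately show ?thesis using hg by simp
      next
        case False
        then show ?thesis using h unfolding Ch_def by auto
      qed
    qed
  qed
  have rootfin: "finite {z::'k. z ^ m = c} \<and> card {z::'k. z ^ m = c} \<le> m" for c
    using roots_bound[OF m(1)] .
  have finS: "finite S" unfolding S_def using IH1 rootfin by auto
  have "card S = (\<Sum>\<psi>\<in>Ch T' H. card {z::'k. z ^ m = \<psi> (gmul m g)})"
    unfolding S_def using IH1 rootfin by (simp add: card_SigmaI)
  also have "\<dots> \<le> card (Ch T' H :: ('b \<Rightarrow> 'k) set) * m"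
    using sum_bounded_above[of "Ch T' H" "\<lambda>\<psi>::'b\<Rightarrow>'k. card {z::'k. z ^ m = \<psi> (gmul m g)}" m] rootfin
    by auto
  finally have cS: "card S \<le> card (Ch T' H :: ('b \<Rightarrow> 'k) set) * m" .
  have finC: "finite (Ch T H :: ('b \<Rightarrow> 'k) set)"
    using finite_imageD[OF finite_subset[OF ES finS] injE] .
  have "card (Ch T H :: ('b \<Rightarrow> 'k) set) \<le> card S"
    using card_inj_on_le[OF injE ES finS] .
  then have "card H * card (Ch T H :: ('b \<Rightarrow> 'k) set) \<le> card H * (card (Ch T' H :: ('b \<Rightarrow> 'k) set) * m)"
    using cS by simp
  also have "\<dots> = (card H * card (Ch T' H :: ('b \<Rightarrow> 'k) set)) * m" by simp
  also have "\<dots> \<le> card T' * m" using IH2 by simp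
  also have "\<dots> \<le> card T" using cardT by (simp add: mult.commute)
  finally show ?case using finC unfolding T_def by simp
qed


lemma spanL_in:
  assumes "grpcl K" "H \<subseteq> K" "set L \<subseteq> K" shows "spanL H L \<subseteq> K"
  using assms(3)
proof (induction L)
  case Nil then show ?case using assms by simp
next
  case (Cons g L)
  then have "spanL H L \<subseteq> K" "g \<in> K" by auto
  then show ?case using gmul_closed[OF assms(1)] assms(1) unfolding grpcl_def by auto
qed

lemma set_in_spanL:
  assumes "grpcl H" shows "set L \<subseteq> spanL H L"
proof (induction L)
  case Nil then show ?case by simp
next
  case (Cons g L)
  have "g = gmul 1 g + 0" by simp
  moreover have "0 \<in> spanL H L" using spanL_closed[OF assms] unfolding grpcl_def by blast
  ultimately have "g \<in> spanL H (g # L)" by (simp only: spanL.simps) blast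
  moreover have "set L \<subseteq> spanL H (g # L)" using Cons.IH spanL_sub[of _ H L g] by blast
  ultimately show ?case by (simp only: list.set insert_subset)
qed

lemma bil_add1:
  fixes \<phi> :: "'b::ab_group_add \<Rightarrow> 'b \<Rightarrow> 'k::field"
  assumes nz: "\<forall>x y. \<phi> x y \<noteq> 0"
    and d1: "cobound2 \<phi> x y z = 1" and d2: "cobound2 \<phi> z x y = 1" and d3: "cobound2 \<phi> x z y = 1"
  shows "Bil \<phi> (x + y) z = Bil \<phi> x z * Bil \<phi> y z"
proof -
  have e1: "\<phi> (x + y) z = \<phi> y z * \<phi> x (y + z) / \<phi> x y"
    using d1 nz unfolding cobound2_def by (simp add: field_simps)
  have e2: "\<phi> z (x + y) = \<phi> (x + z) y * \<phi> z x / \<phi> x y"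
    using d2 nz unfolding cobound2_def by (simp add: field_simps add.commute)
  have e3: "\<phi> x (y + z) = \<phi> (x + z) y * \<phi> x z / \<phi> z y"
    using d3 nz unfolding cobound2_def by (simp add: field_simps add.commute)
  show ?thesis unfolding Bil_def e1 e2 e3 using nz by (simp add: field_simps)
qed

lemma bil_inv:
  fixes \<phi> :: "'b \<Rightarrow> 'b \<Rightarrow> 'k::field"
  assumes nz: "\<forall>x y. \<phi> x y \<noteq> 0"
  shows "Bil \<phi> x y = inverse (Bil \<phi> y x)" "Bil \<phi> x y \<noteq> 0"
  using nz unfolding Bil_def by (auto simp: field_simps)


theorem lemma2p1p2:
  fixes \<omega> :: "'a::{ab_group_add, finite} \<Rightarrow> 'a \<Rightarrow> 'a \<Rightarrow> 'k::alg_closed_field"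
    and f :: "'b::{ab_group_add, finite} \<Rightarrow> 'a"
    and \<phi> :: "'b \<Rightarrow> 'b \<Rightarrow> 'k"
    and K :: "'b set"
  assumes "normalized_3cocycle \<omega>"
    and "group_hom f"
    and "K = {b. f b = 0}"
    and "\<forall>x y. \<phi> x y \<noteq> 0"
    and "\<forall>x y z. cobound2 \<phi> x y z = inverse (\<omega> (f x) (f y) (f z))"
  shows "perp \<phi> (K \<inter> perp \<phi> K) = {x + y | x y. x \<in> K \<and> y \<in> perp \<phi> K}"
proof -
  note nz = assms(4)
  have D: "cobound2 \<phi> x y z = 1" if "f x = 0 \<or> f y = 0 \<or> f z = 0" for x y z
  proof -
    have n: "\<omega> 0 a b = 1" "\<omega> a 0 b = 1" "\<omega> a b 0 = 1" for a b
      using assms(1) unfolding normalized_3cocycle_def by blast+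
    have "\<omega> (f x) (f y) (f z) = 1" using that n by auto
    then show ?thesis using assms(5) by simp
  qed
  have F1: "Bil \<phi> (x + y) k = Bil \<phi> x k * Bil \<phi> y k" if "k \<in> K" for x y k
  proof (rule bil_add1[OF nz])
    show "cobound2 \<phi> x y k = 1" "cobound2 \<phi> k x y = 1" "cobound2 \<phi> x k y = 1"
      using that assms(3) by (auto intro: D)
  qed
  have F1': "Bil \<phi> (x + y) z = Bil \<phi> x z * Bil \<phi> y z" if "x \<in> K" "y \<in> K" for x y z
  proof (rule bil_add1[OF nz])
    show "cobound2 \<phi> x y z = 1" "cobound2 \<phi> z x y = 1" "cobound2 \<phi> x z y = 1"
      using that assms(3) by (auto intro: D)
  qed
  have inv: "Bil \<phi> x y = inverse (Bil \<phi> y x)" and bnz: "Bil \<phi> x y \<noteq> 0" for x y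
    by (rule bil_inv(1)[OF nz], rule bil_inv(2)[OF nz])
  have F2: "Bil \<phi> z (x + y) = Bil \<phi> z x * Bil \<phi> z y" if "x \<in> K" "y \<in> K" for x y z
  proof -
    have "Bil \<phi> z (x + y) = inverse (Bil \<phi> (x + y) z)" by (rule inv)
    also have "\<dots> = inverse (Bil \<phi> x z * Bil \<phi> y z)" using F1'[OF that, of z] by simp
    also have "\<dots> = inverse (Bil \<phi> x z) * inverse (Bil \<phi> y z)" by (simp add: inverse_mult_distrib)
    also have "\<dots> = Bil \<phi> z x * Bil \<phi> z y" using inv[of z x] inv[of z y] by simp
    finally show ?thesis .
  qed
  have f0: "f 0 = 0" using assms(2) unfolding group_hom_def by (metis add_cancel_right_right)
  have fadd: "f (x + y) = f x + f y" for x y using assms(2) unfolding group_hom_def by blast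
  have fminus: "f (- x) = - f x" for x using fadd[of x "-x"] f0 by (simp add: neg_eq_iff_add_eq_0[symmetric])
  have cK: "grpcl K" unfolding grpcl_def assms(3) using f0 fadd by auto
  have Kdiff: "x - y \<in> K" if "x \<in> K" "y \<in> K" for x y
    using that fadd[of x "-y"] fminus[of y] assms(3) by auto
  have perp_iff: "b \<in> perp \<phi> S \<longleftrightarrow> (\<forall>k\<in>S. Bil \<phi> b k = 1)" for b S
    unfolding perp_def by simp
  have B0: "Bil \<phi> 0 k = 1" if "k \<in> K" for k
  proof -
    have "Bil \<phi> 0 k * Bil \<phi> 0 k = Bil \<phi> 0 k * 1" using F1[OF that, of 0 0] by simp
    then show ?thesis using bnz[of 0 k] by (metis mult_left_cancel)
  qed
  define H where "H = K \<inter> perp \<phi> K"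
  have HK: "H \<subseteq> K" unfolding H_def by blast
  have cH: "grpcl H" unfolding grpcl_def H_def
    using cK B0 F1 unfolding grpcl_def by (auto simp: perp_iff)
  show ?thesis
  proof
    show "{x + y | x y. x \<in> K \<and> y \<in> perp \<phi> K} \<subseteq> perp \<phi> (K \<inter> perp \<phi> K)"
    proof clarify
      fix x y assume xy: "x \<in> K" "y \<in> perp \<phi> K"
      show "x + y \<in> perp \<phi> (K \<inter> perp \<phi> K)"
      proof (rule iffD2[OF perp_iff], rule ballI)
        fix k assume k: "k \<in> K \<inter> perp \<phi> K"
        have "Bil \<phi> y k = 1" using xy k perp_iff by auto
        moreover have "Bil \<phi> k x = 1" using xy k perp_iff by auto
        then have "Bil \<phi> x k = 1" using inv[of x k] by simp
        ultimately show "Bil \<phi> (x + y) k = 1" using F1[of k x y] k by simp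
      qed
    qed
  next
    show "perp \<phi> (K \<inter> perp \<phi> K) \<subseteq> {x + y | x y. x \<in> K \<and> y \<in> perp \<phi> K}"
    proof
      fix b assume b: "b \<in> perp \<phi> (K \<inter> perp \<phi> K)"
      obtain L where L: "set L = K" using finite_list[of K] by auto
      have KL: "K = spanL H L"
        using spanL_in[OF cK HK] set_in_spanL[OF cH, of L] L by auto
      define DD where "DD = (Ch K H :: ('b \<Rightarrow> 'k) set)"
      have cardD: "finite DD" "card H * card DD \<le> card K"
        using Ch_card[OF cH, of L] unfolding DD_def KL by auto
      define \<Psi> where "\<Psi> = (\<lambda>c. (\<lambda>x. if x \<in> K then Bil \<phi> c x else 0))"
      have PsiD: "\<Psi> c \<in> DD" if "\<forall>h\<in>H. Bil \<phi> c h = 1" for c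
        unfolding DD_def Ch_def \<Psi>_def using that HK cK F2 bnz unfolding grpcl_def by auto
      have KH: "\<forall>h\<in>H. Bil \<phi> k h = 1" if "k \<in> K" for k
      proof
        fix h assume "h \<in> H"
        then have "Bil \<phi> h k = 1" using that unfolding H_def perp_def by blast
        then show "Bil \<phi> k h = 1" using inv[of k h] by simp
      qed
      have imgD: "\<Psi> ` K \<subseteq> DD" using PsiD KH by auto
      have fib: "card {k \<in> K. \<Psi> k = \<chi>} \<le> card H" if chi: "\<chi> \<in> \<Psi> ` K" for \<chi>
      proof -
        obtain k0 where k0: "k0 \<in> K" "\<chi> = \<Psi> k0" using chi by auto
        have "{k \<in> K. \<Psi> k = \<chi>} \<subseteq> (\<lambda>h. h + k0) ` H"
        proof
          fix k assume k: "k \<in> {k \<in> K. \<Psi> k = \<chi>}"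
          have "k - k0 \<in> perp \<phi> K"
          proof (rule iffD2[OF perp_iff], rule ballI)
            fix x assume x: "x \<in> K"
            have "Bil \<phi> k x = Bil \<phi> k0 x" using fun_cong[of "\<Psi> k" "\<Psi> k0" x] k k0 x
              unfolding \<Psi>_def by simp
            moreover have "Bil \<phi> k x = Bil \<phi> (k - k0) x * Bil \<phi> k0 x"
              using F1[OF x, of "k - k0" k0] by simp
            ultimately show "Bil \<phi> (k - k0) x = 1" using bnz[of k0 x] by simp
          qed
          then have "k - k0 \<in> H" unfolding H_def using Kdiff k k0 by auto
          then show "k \<in> (\<lambda>h. h + k0) ` H" by (auto intro!: image_eqI[of _ _ "k - k0"])
        qed
        then have "card {k \<in> K. \<Psi> k = \<chi>} \<le> card ((\<lambda>h. h + k0) ` H)"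
          by (intro card_mono) auto
        also have "\<dots> \<le> card H" by (rule card_image_le) simp
        finally show ?thesis .
      qed
      have "K = (\<Union>\<chi>\<in>\<Psi> ` K. {k \<in> K. \<Psi> k = \<chi>})" by auto
      then have "card K \<le> (\<Sum>\<chi>\<in>\<Psi> ` K. card {k \<in> K. \<Psi> k = \<chi>})"
        using card_UN_le[of "\<Psi> ` K" "\<lambda>\<chi>. {k \<in> K. \<Psi> k = \<chi>}"] by simp
      also have "\<dots> \<le> card (\<Psi> ` K) * card H"
        using sum_bounded_above[of "\<Psi> ` K" _ "card H"] fib by auto
      finally have c1: "card K \<le> card (\<Psi> ` K) * card H" .
      have Hpos: "0 < card H" using cH unfolding grpcl_def by (auto simp: card_gt_0_iff)
      have "card H * card DD \<le> card H * card (\<Psi> ` K)" using c1 cardD(2) by (metis mult.commute order_trans)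
      then have "card DD \<le> card (\<Psi> ` K)" using Hpos by simp
      then have eqD: "\<Psi> ` K = DD" using card_seteq[OF cardD(1) imgD] by simp
      have "\<forall>h\<in>H. Bil \<phi> b h = 1" using b unfolding H_def perp_def by blast
      then have "\<Psi> b \<in> \<Psi> ` K" using PsiD eqD by auto
      then obtain k where k: "k \<in> K" "\<Psi> k = \<Psi> b" by auto
      have "b - k \<in> perp \<phi> K"
      proof (rule iffD2[OF perp_iff], rule ballI)
        fix x assume x: "x \<in> K"
        have "Bil \<phi> k x = Bil \<phi> b x" using fun_cong[OF k(2), of x] x unfolding \<Psi>_def by simp
        moreover have "Bil \<phi> b x = Bil \<phi> (b - k) x * Bil \<phi> k x"
          using F1[OF x, of "b - k" k] by simp
        ultimately show "Bil \<phi> (b - k) x = 1" using bnz[of k x] by simp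
      qed
      moreover have "b = k + (b - k)" by simp
      ultimately show "b \<in> {x + y | x y. x \<in> K \<and> y \<in> perp \<phi> K}" using k(1) by blast
    qed
  qed
qed

end
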